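(* Let $p\geq2$ be an integer. If $v\in V$ then $v^{2p}\in W$.
   Context: $\Omega:=\mathbb{R}/2\pi\mathbb{Z}\times(0,\pi)$; $X:=\{u\in H^1(\Omega)\cap L^\infty(\Omega): u(t,0)=u(t,\pi)=0,\ u(-t,x)=u(t,x)\}$. $V:=\{\sum_{j\geq1}\xi_j\cos(jt)\sin(jx):\sum j^2\xi_j^2<\infty\}$, equivalently the set of $v(t,x)=\eta(t+x)-\eta(t-x)$ with $\eta\in H^1(\mathbb{R}/2\pi\mathbb{Z})$ odd. $W:=\{w\in X:\int_\Omega wv\,dt\,dx=0\ \forall v\in V\}$. *)

theory Defs
  imports "HOL-Analysis.Analysis"
begin

text \<open>Functions on Omega = (R/2piZ) x (0,pi) are represented as functions
  real x real => real; t-periodicity is imposed where needed.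
  Integration over Omega = integration over [0,2pi] x (0,pi).\<close>

definition Om :: "(real \<times> real) set" where
  "Om = {0..2*pi} \<times> {0<..<pi}"

definition dt :: "(real \<times> real \<Rightarrow> real) \<Rightarrow> real \<times> real \<Rightarrow> real" where
  "dt \<phi> = (\<lambda>z. deriv (\<lambda>s. \<phi> (s, snd z)) (fst z))"

definition dx :: "(real \<times> real \<Rightarrow> real) \<Rightarrow> real \<times> real \<Rightarrow> real" where
  "dx \<phi> = (\<lambda>z. deriv (\<lambda>y. \<phi> (fst z, y)) (snd z))"

coinductive smooth2 :: "(real \<times> real \<Rightarrow> real) \<Rightarrow> bool" where
  "\<lbrakk>\<forall>z. \<phi> differentiable (at z); smooth2 (dt \<phi>); smooth2 (dx \<phi>)\<rbrakk> \<Longrightarrow> smooth2 \<phi>"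

definition t_periodic :: "(real \<times> real \<Rightarrow> real) \<Rightarrow> bool" where
  "t_periodic u \<longleftrightarrow> (\<forall>t x. u (t + 2*pi, x) = u (t, x))"

definition test_per :: "(real \<times> real \<Rightarrow> real) set" where
  "test_per = {\<phi>. smooth2 \<phi> \<and> t_periodic \<phi>}"

definition test_c :: "(real \<times> real \<Rightarrow> real) set" where
  "test_c = {\<phi>. \<phi> \<in> test_per \<and>
     (\<exists>a b. 0 < a \<and> b < pi \<and> (\<forall>t x. x \<notin> {a..b} \<longrightarrow> \<phi> (t, x) = 0))}"

definition L2_Om :: "(real \<times> real \<Rightarrow> real) \<Rightarrow> bool" where
  "L2_Om f \<longleftrightarrow> set_borel_measurable lborel Om f \<and> set_integrable lborel Om (\<lambda>z. (f z)^2)"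

definition Linf_Om :: "(real \<times> real \<Rightarrow> real) \<Rightarrow> bool" where
  "Linf_Om f \<longleftrightarrow> set_borel_measurable lborel Om f \<and>
     (\<exists>C. AE z in lborel. z \<in> Om \<longrightarrow> \<bar>f z\<bar> \<le> C)"

definition H1_Om :: "(real \<times> real \<Rightarrow> real) \<Rightarrow> bool" where
  "H1_Om u \<longleftrightarrow> t_periodic u \<and> L2_Om u \<and>
     (\<exists>g1 g2. L2_Om g1 \<and> L2_Om g2 \<and>
        (\<forall>\<phi>\<in>test_c. (LINT z:Om|lborel. u z * dt \<phi> z) = - (LINT z:Om|lborel. g1 z * \<phi> z)) \<and>
        (\<forall>\<phi>\<in>test_c. (LINT z:Om|lborel. u z * dx \<phi> z) = - (LINT z:Om|lborel. g2 z * \<phi> z)))"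

text \<open>Zero trace on x = 0 and x = pi: the integration by parts formula in x holds
  without boundary terms for all smooth t-periodic functions (not vanishing at x = 0, pi).\<close>
definition zero_trace :: "(real \<times> real \<Rightarrow> real) \<Rightarrow> bool" where
  "zero_trace u \<longleftrightarrow> (\<exists>g2. L2_Om g2 \<and>
     (\<forall>\<phi>\<in>test_per. (LINT z:Om|lborel. u z * dx \<phi> z) = - (LINT z:Om|lborel. g2 z * \<phi> z)))"

definition Xsp :: "(real \<times> real \<Rightarrow> real) set" where
  "Xsp = {u. H1_Om u \<and> Linf_Om u \<and> zero_trace u \<and> (\<forall>t x. u (-t, x) = u (t, x))}"

definition Vsp :: "(real \<times> real \<Rightarrow> real) set" where
  "Vsp = {(\<lambda>(t, x). \<Sum>j. \<xi> j * cos (real j * t) * sin (real j * x)) | \<xi>.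
            summable (\<lambda>j. (real j)^2 * (\<xi> j)^2)}"

definition Wsp :: "(real \<times> real \<Rightarrow> real) set" where
  "Wsp = {w. w \<in> Xsp \<and> (\<forall>v\<in>Vsp. (LINT z:Om|lborel. w z * v z) = 0)}"

end

theory Submission
  imports Defs
begin

lemma Om_sub: "Om \<subseteq> cbox (0,0) (2*pi,pi)"
  unfolding Om_def by (auto simp: cbox_Pair_eq)

lemma Om_borel[measurable]: "Om \<in> sets lborel"
proof -
  have "Om = ({0..2*pi} \<times> UNIV) \<inter> (UNIV \<times> {0<..<pi})"
    unfolding Om_def by auto
  moreover have "closed ({0..2*pi} \<times> (UNIV::real set))"
    by (intro closed_Times) auto
  moreover have "open ((UNIV::real set) \<times> {0<..<pi})"
    by (intro open_Times) auto
  ultimately show ?thesis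
    by (metis borel_closed borel_open sets.Int sets_lborel)
qed

lemma cont_set_integrable:
  fixes f :: "real \<times> real \<Rightarrow> real"
  assumes "continuous_on UNIV f"
  shows "set_integrable lborel Om f"
proof -
  have "set_integrable lborel (cbox (0,0) (2*pi,pi)) f"
    unfolding set_integrable_def
    by (rule borel_integrable_compact) (auto intro: continuous_on_subset[OF assms])
  then show ?thesis
    using Om_borel Om_sub by (rule set_integrable_subset)
qed

lemma Om_negl: "negligible (cbox (0,0) (2*pi,pi) - Om)"
proof -
  have "cbox (0,0) (2*pi,pi) - Om \<subseteq> {z. z \<bullet> (0,1) = 0} \<union> {z. z \<bullet> (0,1) = pi}"
    unfolding Om_def by (auto simp: cbox_Pair_eq)
  moreover have "(0::real,1::real) \<in> Basis" by (simp add: Basis_prod_def)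
  moreover have "negligible ({z. z \<bullet> (0,1) = 0} \<union> {z::real\<times>real. z \<bullet> (0,1) = pi})"
    using calculation(2) by (intro negligible_Un negligible_standard_hyperplane)
  ultimately show ?thesis
    using negligible_subset by blast
qed

lemma cont_int_Om:
  fixes f :: "real \<times> real \<Rightarrow> real"
  assumes "continuous_on UNIV f"
  shows "(LINT z:Om|lborel. f z) = integral (cbox (0,0) (2*pi,pi)) f"
proof -
  have "(LINT z:Om|lborel. f z) = integral Om f"
    by (rule set_borel_integral_eq_integral(2)[OF cont_set_integrable[OF assms]])
  also have "\<dots> = integral (cbox (0,0) (2*pi,pi)) f"
    by (rule integral_spike_set) (use Om_negl Om_sub in \<open>auto intro: negligible_subset\<close>)
  finally show ?thesis .
qed

lemma cont_int_Om_tx: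
  fixes f :: "real \<times> real \<Rightarrow> real"
  assumes "continuous_on UNIV f"
  shows "(LINT z:Om|lborel. f z) = integral {0..2*pi} (\<lambda>t. integral {0..pi} (\<lambda>x. f (t,x)))"
  using cont_int_Om[OF assms] integral_prod_continuous[of 0 0 "2*pi" pi f] assms
  by (auto intro: continuous_on_subset)

lemma cont_int_Om_xt:
  fixes f :: "real \<times> real \<Rightarrow> real"
  assumes "continuous_on UNIV f"
  shows "(LINT z:Om|lborel. f z) = integral {0..pi} (\<lambda>x. integral {0..2*pi} (\<lambda>t. f (t,x)))"
proof -
  have "continuous_on (cbox (0,0) (2*pi,pi)) (\<lambda>(x,y). f (x,y))"
    using assms by (auto intro: continuous_on_subset)
  from integral_swap_continuous[where f="\<lambda>x y. f (x,y)", OF this]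
  show ?thesis using cont_int_Om_tx[OF assms] by simp
qed

lemma integral_reflect_pi:
  fixes g :: "real \<Rightarrow> real"
  shows "integral {0..pi} (\<lambda>x. g (pi - x)) = integral {0..pi} g"
proof -
  have "integral {0..pi} (\<lambda>x. g (pi - x)) = integral {0..pi} (\<lambda>x. (g \<circ> (+) pi) (- x))"
    by (simp add: o_def)
  also have "\<dots> = integral {-pi..0} (g \<circ> (+) pi)"
    using Henstock_Kurzweil_Integration.integral_reflect_real[of 0 "-pi" "g \<circ> (+) pi"] by simp
  also have "\<dots> = integral {0..pi} g"
    using integral_shift_Icc_real[of "-pi" 0 g pi] by simp
  finally show ?thesis .
qed

lemma sym_zero:
  fixes f :: "real \<times> real \<Rightarrow> real"
  assumes cont: "continuous_on UNIV f"
    and sym: "\<And>t x. f (t + pi, pi - x) = - f (t, x)"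
  shows "(LINT z:Om|lborel. f z) = 0"
proof -
  define G where "G x = integral {0..pi} (\<lambda>t. f (t,x))" for x
  have contx: "continuous_on UNIV (\<lambda>t. f (t,x))" for x
    by (intro continuous_on_compose2[OF cont]) (auto intro!: continuous_intros)
  have inner: "integral {0..2*pi} (\<lambda>t. f (t,x)) = G x - G (pi - x)" for x
  proof -
    have "integral {0..pi} (\<lambda>t. f (t,x)) + integral {pi..2*pi} (\<lambda>t. f (t,x))
        = integral {0..2*pi} (\<lambda>t. f (t,x))"
      by (rule Henstock_Kurzweil_Integration.integral_combine) (auto intro: integrable_continuous_real continuous_on_subset[OF contx])
    moreover have "integral {pi..2*pi} (\<lambda>t. f (t,x)) = integral {0..pi} ((\<lambda>t. f (t,x)) \<circ> (+) pi)"
      using integral_shift_Icc_real[of 0 pi "\<lambda>t. f (t,x)" pi] by simp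
    moreover have "((\<lambda>t. f (t,x)) \<circ> (+) pi) = (\<lambda>t. - f (t, pi - x))"
    proof
      fix t
      show "((\<lambda>t. f (t,x)) \<circ> (+) pi) t = - f (t, pi - x)"
        using sym[of t "pi - x"] by (simp add: add.commute)
    qed
    ultimately show ?thesis unfolding G_def by simp
  qed
  have Gc: "continuous_on UNIV G"
  proof -
    have "continuous_on UNIV (\<lambda>z::real\<times>real. f (snd z, fst z))"
      by (intro continuous_on_compose2[OF cont]) (auto intro!: continuous_intros)
    then have "continuous_on (UNIV \<times> cbox 0 pi) (\<lambda>(x, t). f (t, x))"
      by (simp add: case_prod_beta') (meson continuous_on_subset subset_UNIV)
    from integral_continuous_on_param[OF this] show ?thesis
      unfolding G_def by simp
  qed
  have Gi: "G integrable_on {0..pi}" "(\<lambda>x. G (pi - x)) integrable_on {0..pi}"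
    by (auto intro!: integrable_continuous_real continuous_on_compose2[OF Gc] continuous_intros)
  have "(LINT z:Om|lborel. f z) = integral {0..pi} (\<lambda>x. G x - G (pi - x))"
    using cont_int_Om_xt[OF cont] inner by simp
  also have "\<dots> = integral {0..pi} G - integral {0..pi} (\<lambda>x. G (pi - x))"
    using Gi by (rule integral_diff)
  also have "\<dots> = 0" using integral_reflect_pi[of G] by simp
  finally show ?thesis .
qed

definition trm :: "(nat \<Rightarrow> real) \<Rightarrow> nat \<Rightarrow> real \<times> real \<Rightarrow> real" where
  "trm \<xi> j z = \<xi> j * cos (real j * fst z) * sin (real j * snd z)"

definition vN :: "(nat \<Rightarrow> real) \<Rightarrow> nat \<Rightarrow> real \<times> real \<Rightarrow> real" where
  "vN \<xi> N z = (\<Sum>j<N. trm \<xi> j z)"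

definition vS :: "(nat \<Rightarrow> real) \<Rightarrow> real \<times> real \<Rightarrow> real" where
  "vS \<xi> z = (\<Sum>j. trm \<xi> j z)"

definition bb :: "(nat \<Rightarrow> real) \<Rightarrow> nat \<Rightarrow> real" where
  "bb \<xi> j = ((real j)^2 * (\<xi> j)^2 + inverse ((real j)^2)) / 2"

lemma Vsp_vS: "(\<lambda>(t, x). \<Sum>j. \<xi> j * cos (real j * t) * sin (real j * x)) = vS \<xi>"
  by (auto simp: vS_def trm_def)

lemma bb_nonneg: "0 \<le> bb \<xi> j"
  by (simp add: bb_def)

lemma trm_bound: "\<bar>trm \<xi> j z\<bar> \<le> bb \<xi> j"
proof (cases "j = 0")
  case True
  then show ?thesis by (simp add: trm_def bb_nonneg)
next
  case False
  then have jp: "real j > 0" by simp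
  have "\<bar>trm \<xi> j z\<bar> \<le> \<bar>\<xi> j\<bar>"
  proof -
    have "\<bar>trm \<xi> j z\<bar> = \<bar>\<xi> j\<bar> * \<bar>cos (real j * fst z)\<bar> * \<bar>sin (real j * snd z)\<bar>"
      by (simp add: trm_def abs_mult)
    also have "\<dots> \<le> \<bar>\<xi> j\<bar> * 1 * 1"
      by (intro mult_mono) auto
    finally show ?thesis by simp
  qed
  also have "\<bar>\<xi> j\<bar> \<le> bb \<xi> j"
  proof -
    have "0 \<le> (real j * \<bar>\<xi> j\<bar> - inverse (real j))^2" by simp
    also have "\<dots> = (real j)^2 * (\<xi> j)^2 + inverse ((real j)^2) - 2 * \<bar>\<xi> j\<bar>"
      using jp by (simp add: power2_eq_square field_simps)
    finally show ?thesis unfolding bb_def by simp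
  qed
  finally show ?thesis .
qed

lemma bb_summable:
  assumes "summable (\<lambda>j. (real j)^2 * (\<xi> j)^2)"
  shows "summable (bb \<xi>)"
proof -
  have "summable (\<lambda>j. inverse ((real j)^2))"
    using inverse_power_summable[of 2, where 'a=real] by simp
  then show ?thesis
    unfolding bb_def using assms by (intro summable_divide summable_add) auto
qed

lemma trm_summable:
  assumes "summable (\<lambda>j. (real j)^2 * (\<xi> j)^2)"
  shows "summable (\<lambda>j. \<bar>trm \<xi> j z\<bar>)" "summable (\<lambda>j. trm \<xi> j z)"
proof -
  show s: "summable (\<lambda>j. \<bar>trm \<xi> j z\<bar>)"
    by (rule summable_comparison_test[OF _ bb_summable[OF assms]]) (auto intro: trm_bound)
  then show "summable (\<lambda>j. trm \<xi> j z)" by (rule summable_rabs_cancel)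
qed

lemma vN_bound:
  assumes "summable (\<lambda>j. (real j)^2 * (\<xi> j)^2)"
  shows "\<bar>vN \<xi> N z\<bar> \<le> suminf (bb \<xi>)"
proof -
  have "\<bar>vN \<xi> N z\<bar> \<le> (\<Sum>j<N. \<bar>trm \<xi> j z\<bar>)"
    unfolding vN_def by (rule sum_abs)
  also have "\<dots> \<le> (\<Sum>j<N. bb \<xi> j)"
    by (intro sum_mono trm_bound)
  also have "\<dots> \<le> suminf (bb \<xi>)"
    by (intro sum_le_suminf bb_summable[OF assms]) (auto simp: bb_nonneg)
  finally show ?thesis .
qed

lemma vN_lim:
  assumes "summable (\<lambda>j. (real j)^2 * (\<xi> j)^2)"
  shows "(\<lambda>N. vN \<xi> N z) \<longlonglongrightarrow> vS \<xi> z"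
  unfolding vN_def vS_def using summable_LIMSEQ[OF trm_summable(2)[OF assms]] .

lemma vS_bound:
  assumes "summable (\<lambda>j. (real j)^2 * (\<xi> j)^2)"
  shows "\<bar>vS \<xi> z\<bar> \<le> suminf (bb \<xi>)"
proof -
  have "(\<lambda>N. \<bar>vN \<xi> N z\<bar>) \<longlonglongrightarrow> \<bar>vS \<xi> z\<bar>"
    by (intro tendsto_rabs vN_lim assms)
  then show ?thesis
    by (rule LIMSEQ_le_const2) (auto intro: vN_bound assms)
qed

lemma trm_sym: "trm \<xi> j (t + pi, pi - x) = - trm \<xi> j (t, x)"
proof -
  have "cos (real j * (t + pi)) = (-1)^j * cos (real j * t)"
    by (simp add: distrib_left cos_add)
  moreover have "sin (real j * (pi - x)) = - ((-1)^j * sin (real j * x))"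
    by (simp add: right_diff_distrib sin_diff)
  ultimately have "trm \<xi> j (t + pi, pi - x) = - (((-1)^j * (-1)^j) * trm \<xi> j (t, x))"
    by (simp add: trm_def algebra_simps)
  also have "(-1::real)^j * (-1)^j = 1"
    by (simp flip: power_add)
  finally show ?thesis by simp
qed

lemma vN_sym: "vN \<xi> N (t + pi, pi - x) = - vN \<xi> N (t, x)"
  unfolding vN_def by (simp add: trm_sym sum_negf)

lemma vS_sym:
  assumes "summable (\<lambda>j. (real j)^2 * (\<xi> j)^2)"
  shows "vS \<xi> (t + pi, pi - x) = - vS \<xi> (t, x)"
  unfolding vS_def by (simp add: trm_sym suminf_minus trm_summable[OF assms])

lemma trm_even: "trm \<xi> j (- t, x) = trm \<xi> j (t, x)"
  by (simp add: trm_def)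

lemma vS_even: "vS \<xi> (- t, x) = vS \<xi> (t, x)"
  unfolding vS_def by (simp add: trm_even)

lemma vS_per:
  assumes "summable (\<lambda>j. (real j)^2 * (\<xi> j)^2)"
  shows "vS \<xi> (t + 2*pi, x) = vS \<xi> (t, x)"
proof -
  have "vS \<xi> (t + 2*pi, x) = vS \<xi> ((t + pi) + pi, pi - (pi - x))"
    by (simp add: algebra_simps)
  also have "\<dots> = vS \<xi> (t, x)" by (simp only: vS_sym[OF assms] minus_minus)
  finally show ?thesis .
qed

lemma vN_cont: "continuous_on UNIV (vN \<xi> N)"
  unfolding vN_def trm_def by (intro continuous_intros)

lemma vN_bdry: "vN \<xi> N (t, 0) = 0" "vN \<xi> N (t, pi) = 0"
  unfolding vN_def trm_def by (simp_all add: mult.commute)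

lemma vN_meas[measurable]: "vN \<xi> N \<in> borel_measurable lborel"
  using borel_measurable_continuous_onI[OF vN_cont] by simp

lemma vS_meas[measurable]:
  assumes "summable (\<lambda>j. (real j)^2 * (\<xi> j)^2)"
  shows "vS \<xi> \<in> borel_measurable lborel"
  by (rule borel_measurable_LIMSEQ_real[OF vN_lim[OF assms]]) simp

lemma const_set_integrable: "set_integrable lborel Om (\<lambda>z. c::real)"
  by (rule cont_set_integrable) simp

lemma orth:
  assumes sx: "summable (\<lambda>j. (real j)^2 * (\<xi> j)^2)"
    and sz: "summable (\<lambda>j. (real j)^2 * (\<zeta> j)^2)"
  shows "(LINT z:Om|lborel. (vS \<xi> z)^(2*p) * vS \<zeta> z) = 0"
proof -
  define s where "s N z = indicator Om z * ((vN \<xi> N z)^(2*p) * vN \<zeta> N z)" for N z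
  define f where "f z = indicator Om z * ((vS \<xi> z)^(2*p) * vS \<zeta> z)" for z
  define w where "w z = indicator Om z * ((suminf (bb \<xi>))^(2*p) * suminf (bb \<zeta>))" for z
  have s0: "integral\<^sup>L lborel (s N) = 0" for N
  proof -
    have "integral\<^sup>L lborel (s N) = (LINT z:Om|lborel. (vN \<xi> N z)^(2*p) * vN \<zeta> N z)"
      unfolding s_def set_lebesgue_integral_def by simp
    also have "\<dots> = 0"
    proof (rule sym_zero)
      show "continuous_on UNIV (\<lambda>z. (vN \<xi> N z)^(2*p) * vN \<zeta> N z)"
        using vN_cont by (intro continuous_intros) auto
      fix t x
      show "vN \<xi> N (t + pi, pi - x) ^ (2 * p) * vN \<zeta> N (t + pi, pi - x) =
         - (vN \<xi> N (t, x) ^ (2 * p) * vN \<zeta> N (t, x))"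
        by (simp add: vN_sym power_mult)
    qed
    finally show ?thesis .
  qed
  have "(\<lambda>N. integral\<^sup>L lborel (s N)) \<longlonglongrightarrow> integral\<^sup>L lborel f"
  proof (rule integral_dominated_convergence[where w=w])
    show "f \<in> borel_measurable lborel" unfolding f_def using sx sz by measurable
    show "\<And>N. s N \<in> borel_measurable lborel" unfolding s_def by measurable
    show "integrable lborel w"
      using const_set_integrable unfolding w_def set_integrable_def by simp
    show "AE z in lborel. (\<lambda>N. s N z) \<longlonglongrightarrow> f z"
      unfolding s_def f_def
      by (intro AE_I2 tendsto_intros vN_lim sx sz)
    show "AE z in lborel. norm (s N z) \<le> w z" for N
    proof (intro AE_I2)
      fix z
      have "\<bar>(vN \<xi> N z)^(2*p) * vN \<zeta> N z\<bar> \<le> (suminf (bb \<xi>))^(2*p) * suminf (bb \<zeta>)"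
        unfolding abs_mult power_abs
        by (intro mult_mono power_mono vN_bound sx sz) auto
      then show "norm (s N z) \<le> w z"
        unfolding s_def w_def by (auto simp: indicator_def abs_mult)
    qed
  qed
  then have "integral\<^sup>L lborel f = 0"
    using s0 by (simp add: LIMSEQ_const_iff)
  then show ?thesis
    unfolding f_def set_lebesgue_integral_def by simp
qed

lemma cos_int0:
  assumes "m \<ge> (1::nat)"
  shows "integral {0..2*pi} (\<lambda>t. cos (real m * t)) = 0"
proof -
  have "((\<lambda>t. cos (real m * t)) has_integral (sin (real m * (2*pi)) / real m - sin (real m * 0) / real m)) {0..2*pi}"
  proof (rule fundamental_theorem_of_calculus)
    fix t :: real
    have "((\<lambda>t. sin (real m * t) / real m) has_real_derivative (cos (real m * t) * real m / real m)) (at t within {0..2*pi})"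
      by (auto intro!: derivative_eq_intros)
    then show "((\<lambda>t. sin (real m * t) / real m) has_vector_derivative cos (real m * t)) (at t within {0..2*pi})"
      using assms by (simp add: has_real_derivative_iff_has_vector_derivative)
  qed simp
  moreover have "sin (real m * (2*pi)) = 0"
    using sin_npi[of "2*m"] by (simp add: mult.commute mult.left_commute)
  ultimately show ?thesis by (simp add: integral_unique)
qed

lemma cos_diff_nat:
  assumes "j \<noteq> (k::nat)"
  obtains m where "m \<ge> 1" "\<And>t. cos (real j * t - real k * t) = cos (real m * t)"
proof (cases "j > k")
  case True
  show ?thesis
    by (rule that[of "j - k"]) (use True in \<open>auto simp: of_nat_diff left_diff_distrib\<close>)
next
  case False
  then have "k > j" using assms by simp
  show ?thesis
  proof (rule that[of "k - j"])
    show "1 \<le> k - j" using \<open>k > j\<close> by simp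
    fix t
    have "cos (real j * t - real k * t) = cos (real k * t - real j * t)"
      by (metis cos_minus minus_diff_eq)
    then show "cos (real j * t - real k * t) = cos (real (k - j) * t)"
      using \<open>k > j\<close> by (simp add: of_nat_diff left_diff_distrib)
  qed
qed

lemma sin_orth:
  assumes "j \<noteq> (k::nat)"
  shows "integral {0..2*pi} (\<lambda>t. sin (real j * t) * sin (real k * t)) = 0"
proof -
  obtain m where m: "m \<ge> 1" "\<And>t. cos (real j * t - real k * t) = cos (real m * t)"
    using cos_diff_nat[OF assms] by blast
  have jk: "j + k \<ge> 1" using assms by simp
  have eq: "(\<lambda>t. sin (real j * t) * sin (real k * t)) = (\<lambda>t. (cos (real m * t) - cos (real (j+k) * t)) / 2)"
    by (rule ext) (simp add: sin_times_sin m(2)[symmetric] distrib_right)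
  have i1: "(\<lambda>t. cos (real m * t)) integrable_on {0..2*pi}" "(\<lambda>t. cos (real (j+k) * t)) integrable_on {0..2*pi}"
    by (auto intro!: integrable_continuous_real continuous_intros)
  show ?thesis
    unfolding eq using integral_diff[OF i1] cos_int0[OF m(1)] cos_int0[OF jk]
    by (simp add: integral_divide)
qed

lemma cos_orth:
  assumes "j \<noteq> (k::nat)"
  shows "integral {0..2*pi} (\<lambda>t. cos (real j * t) * cos (real k * t)) = 0"
proof -
  obtain m where m: "m \<ge> 1" "\<And>t. cos (real j * t - real k * t) = cos (real m * t)"
    using cos_diff_nat[OF assms] by blast
  have jk: "j + k \<ge> 1" using assms by simp
  have eq: "(\<lambda>t. cos (real j * t) * cos (real k * t)) = (\<lambda>t. (cos (real m * t) + cos (real (j+k) * t)) / 2)"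
    by (rule ext) (simp add: cos_times_cos m(2)[symmetric] distrib_right)
  have i1: "(\<lambda>t. cos (real m * t)) integrable_on {0..2*pi}" "(\<lambda>t. cos (real (j+k) * t)) integrable_on {0..2*pi}"
    by (auto intro!: integrable_continuous_real continuous_intros)
  show ?thesis
    unfolding eq using integral_add[OF i1] cos_int0[OF m(1)] cos_int0[OF jk]
    by (simp add: integral_divide)
qed

lemma orth_sum:
  fixes f :: "nat \<Rightarrow> real \<Rightarrow> real" and c :: "nat \<Rightarrow> real"
  assumes fin: "finite J" and cont: "\<And>j. continuous_on UNIV (f j)"
    and orth: "\<And>j k. j \<noteq> k \<Longrightarrow> integral {0..2*pi} (\<lambda>t. f j t * f k t) = 0"
    and bnd: "\<And>j t. \<bar>f j t\<bar> \<le> 1"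
  shows "integral {0..2*pi} (\<lambda>t. (\<Sum>j\<in>J. c j * f j t)^2) \<le> 2*pi * (\<Sum>j\<in>J. (c j)^2)"
proof -
  have intg: "(\<lambda>t. h (f j t) (f k t)) integrable_on {0..2*pi}" if "continuous_on UNIV (\<lambda>(a,b). h a b)" for h :: "real \<Rightarrow> real \<Rightarrow> real" and j k
  proof -
    have "continuous_on UNIV (\<lambda>t. (\<lambda>(a,b). h a b) (f j t, f k t))"
      by (intro continuous_on_compose2[OF that] continuous_intros cont) auto
    then show ?thesis by (auto intro: integrable_continuous_real continuous_on_subset)
  qed
  have prodi: "(\<lambda>t. c j * c k * (f j t * f k t)) integrable_on {0..2*pi}" for j k
    by (rule intg[where h="\<lambda>a b. c j * c k * (a * b)"]) (auto intro!: continuous_intros simp: case_prod_beta')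
  have "(\<lambda>t. (\<Sum>j\<in>J. c j * f j t)^2) = (\<lambda>t. \<Sum>j\<in>J. \<Sum>k\<in>J. c j * c k * (f j t * f k t))"
    by (rule ext) (simp add: power2_eq_square sum_product mult_ac)
  then have "integral {0..2*pi} (\<lambda>t. (\<Sum>j\<in>J. c j * f j t)^2)
      = (\<Sum>j\<in>J. \<Sum>k\<in>J. integral {0..2*pi} (\<lambda>t. c j * c k * (f j t * f k t)))"
    using fin prodi by (simp add: integral_sum integrable_sum)
  also have "\<dots> = (\<Sum>j\<in>J. \<Sum>k\<in>J. if k = j then (c j)^2 * integral {0..2*pi} (\<lambda>t. f j t * f j t) else 0)"
    by (intro sum.cong refl) (auto simp: orth power2_eq_square)
  also have "\<dots> = (\<Sum>j\<in>J. (c j)^2 * integral {0..2*pi} (\<lambda>t. f j t * f j t))"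
    using fin by simp
  also have "\<dots> \<le> (\<Sum>j\<in>J. (c j)^2 * (2*pi))"
  proof (intro sum_mono mult_left_mono)
    fix j
    have "integral {0..2*pi} (\<lambda>t. f j t * f j t) \<le> integral {0..2*pi} (\<lambda>t. 1::real)"
    proof (rule integral_le)
      show "(\<lambda>t. f j t * f j t) integrable_on {0..2*pi}"
        by (rule intg[where h="\<lambda>a b. a * b"]) (auto intro!: continuous_intros simp: case_prod_beta')
      fix t
      have "\<bar>f j t\<bar> * \<bar>f j t\<bar> \<le> 1 * 1"
        by (intro mult_mono bnd) auto
      then show "f j t * f j t \<le> 1" by (simp add: abs_mult[symmetric])
    qed auto
    then show "integral {0..2*pi} (\<lambda>t. f j t * f j t) \<le> 2*pi" by simp
  qed auto
  also have "\<dots> = 2*pi * (\<Sum>j\<in>J. (c j)^2)"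
    by (simp add: sum_distrib_left mult_ac)
  finally show ?thesis .
qed

lemma inner_integrable:
  fixes h :: "real \<times> real \<Rightarrow> real"
  assumes "continuous_on UNIV h"
  shows "(\<lambda>x. integral {0..2*pi} (\<lambda>t. h (t,x))) integrable_on {0..pi}"
proof -
  have "continuous_on UNIV (\<lambda>z::real\<times>real. h (snd z, fst z))"
    by (intro continuous_on_compose2[OF assms]) (auto intro!: continuous_intros)
  then have "continuous_on (UNIV \<times> cbox 0 (2*pi)) (\<lambda>(x, t). h (t, x))"
    by (simp add: case_prod_beta') (meson continuous_on_subset subset_UNIV)
  from integral_continuous_on_param[OF this]
  have "continuous_on UNIV (\<lambda>x. integral {0..2*pi} (\<lambda>t. h (t,x)))" by simp
  then show ?thesis by (auto intro: integrable_continuous_real continuous_on_subset)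
qed

lemma FE:
  fixes f g :: "nat \<Rightarrow> real \<Rightarrow> real" and a :: "nat \<Rightarrow> real"
  assumes fin: "finite J" and fc: "\<And>j. continuous_on UNIV (f j)"
    and orth: "\<And>j k. j \<noteq> k \<Longrightarrow> integral {0..2*pi} (\<lambda>t. f j t * f k t) = 0"
    and fb: "\<And>j t. \<bar>f j t\<bar> \<le> 1"
    and gc: "\<And>j. continuous_on UNIV (g j)" and gb: "\<And>j x. \<bar>g j x\<bar> \<le> 1"
  shows "(LINT z:Om|lborel. (\<Sum>j\<in>J. a j * f j (fst z) * g j (snd z))^2) \<le> 2*pi^2 * (\<Sum>j\<in>J. (a j)^2)"
proof -
  have fc': "continuous_on UNIV (\<lambda>z::real\<times>real. f j (fst z))" for j
    by (intro continuous_on_compose2[OF fc]) (auto intro!: continuous_intros)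
  have gc': "continuous_on UNIV (\<lambda>z::real\<times>real. g j (snd z))" for j
    by (intro continuous_on_compose2[OF gc]) (auto intro!: continuous_intros)
  have hc: "continuous_on UNIV (\<lambda>z. (\<Sum>j\<in>J. a j * f j (fst z) * g j (snd z))^2)"
    by (intro continuous_intros fc' gc')
  have "(LINT z:Om|lborel. (\<Sum>j\<in>J. a j * f j (fst z) * g j (snd z))^2)
      = integral {0..pi} (\<lambda>x. integral {0..2*pi} (\<lambda>t. (\<Sum>j\<in>J. a j * f j t * g j x)^2))"
    using cont_int_Om_xt[OF hc] by simp
  also have "\<dots> \<le> integral {0..pi} (\<lambda>x. 2*pi * (\<Sum>j\<in>J. (a j)^2))"
  proof (rule integral_le)
    show "(\<lambda>x. integral {0..2*pi} (\<lambda>t. (\<Sum>j\<in>J. a j * f j t * g j x)^2)) integrable_on {0..pi}"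
      using inner_integrable[OF hc] by simp
    fix x
    have "integral {0..2*pi} (\<lambda>t. (\<Sum>j\<in>J. a j * f j t * g j x)^2)
        = integral {0..2*pi} (\<lambda>t. (\<Sum>j\<in>J. (a j * g j x) * f j t)^2)"
      by (simp add: mult_ac)
    also have "\<dots> \<le> 2*pi * (\<Sum>j\<in>J. (a j * g j x)^2)"
      by (rule orth_sum[OF fin fc orth fb])
    also have "\<dots> \<le> 2*pi * (\<Sum>j\<in>J. (a j)^2)"
    proof (intro mult_left_mono sum_mono)
      fix j
      have "(g j x)^2 \<le> 1"
        using gb[of j x] by (simp add: abs_square_le_1)
      then show "(a j * g j x)^2 \<le> (a j)^2"
        by (simp add: power_mult_distrib mult_left_le)
    qed auto
    finally show "integral {0..2*pi} (\<lambda>t. (\<Sum>j\<in>J. a j * f j t * g j x)^2) \<le> 2*pi * (\<Sum>j\<in>J. (a j)^2)" .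
  qed auto
  also have "\<dots> = 2*pi^2 * (\<Sum>j\<in>J. (a j)^2)"
    by (simp add: power2_eq_square)
  finally show ?thesis .
qed

lemma LIM_a:
  fixes e :: "nat \<Rightarrow> real"
  assumes "e \<longlonglongrightarrow> 0"
  obtains r where "strict_mono r" "\<And>k. e (r k) \<le> (1/4)^k"
proof -
  have ev: "\<exists>M. \<forall>N\<ge>M. e N \<le> (1/4)^n" for n
  proof -
    obtain M where "\<forall>N\<ge>M. norm (e N - 0) < (1/4)^n"
      using LIMSEQ_D[OF assms, of "(1/4)^n"] by auto
    then show ?thesis by (intro exI[of _ M]) auto
  qed
  have "\<exists>r. \<forall>n. (\<forall>N\<ge>r n. e N \<le> (1/4)^n) \<and> r n < r (Suc n)"
  proof (rule dependent_nat_choice)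
    show "\<exists>x. \<forall>N\<ge>x. e N \<le> (1/4)^0" using ev[of 0] .
    fix x n
    assume "\<forall>N\<ge>x. e N \<le> (1/4)^n"
    obtain M where M: "\<forall>N\<ge>M. e N \<le> (1/4)^Suc n" using ev by blast
    show "\<exists>y. (\<forall>N\<ge>y. e N \<le> (1/4)^Suc n) \<and> x < y"
      by (rule exI[of _ "max M (Suc x)"]) (use M in auto)
  qed
  then obtain r where r: "\<And>n. \<forall>N\<ge>r n. e N \<le> (1/4)^n" "\<And>n. r n < r (Suc n)" by blast
  show ?thesis
  proof (rule that)
    show "strict_mono r" using r(2) by (rule strict_monoI_Suc)
    show "e (r k) \<le> (1/4)^k" for k using r(1)[of k] by auto
  qed
qed

lemma LIM_b:
  fixes f :: "nat \<Rightarrow> 'a \<Rightarrow> real"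
  assumes int: "\<And>i. integrable M (f i)" and nn: "\<And>i z. 0 \<le> f i z"
    and sm: "summable (\<lambda>i. integral\<^sup>L M (f i))"
  shows "AE z in M. summable (\<lambda>i. f i z)" "integrable M (\<lambda>z. \<Sum>i. f i z)"
proof -
  have meas[measurable]: "f i \<in> borel_measurable M" for i using int[of i] by auto
  have "(\<integral>\<^sup>+z. (\<Sum>i. ennreal (f i z)) \<partial>M) = (\<Sum>i. \<integral>\<^sup>+z. ennreal (f i z) \<partial>M)"
    by (rule nn_integral_suminf) measurable
  also have "\<dots> = (\<Sum>i. ennreal (integral\<^sup>L M (f i)))"
    by (intro suminf_cong nn_integral_eq_integral int AE_I2 nn)
  also have "\<dots> = ennreal (\<Sum>i. integral\<^sup>L M (f i))"
    by (intro suminf_ennreal2 sm integral_nonneg_AE AE_I2 nn)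
  finally have fin: "(\<integral>\<^sup>+z. (\<Sum>i. ennreal (f i z)) \<partial>M) \<noteq> \<infinity>" by simp
  have "AE z in M. (\<Sum>i. ennreal (f i z)) \<noteq> \<infinity>"
    by (rule nn_integral_PInf_AE[OF _ fin]) measurable
  then show as: "AE z in M. summable (\<lambda>i. f i z)"
    by eventually_elim (rule summable_suminf_not_top, auto simp: nn)
  show "integrable M (\<lambda>z. \<Sum>i. f i z)"
  proof (rule integrable_suminf[OF int])
    show "AE x in M. summable (\<lambda>i. norm (f i x))"
      using as by eventually_elim (simp add: abs_of_nonneg nn)
    show "summable (\<lambda>i. \<integral>x. norm (f i x) \<partial>M)"
      using sm by (simp add: abs_of_nonneg nn)
  qed
qed

lemma amgm_abs:
  fixes d :: real
  shows "\<bar>d\<bar> \<le> ((1/2)^k + 2^k * d^2) / 2"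
proof -
  have a: "(2::real)^k * (1/2)^k = 1" by (simp add: power_mult_distrib[symmetric])
  have "0 \<le> 2^k * (\<bar>d\<bar> - (1/2)^k)^2" by simp
  also have "\<dots> = 2^k * d^2 - 2 * \<bar>d\<bar> * (2^k * (1/2)^k) + (2^k * (1/2)^k) * (1/2)^k"
    by (simp add: power2_eq_square algebra_simps)
  also have "\<dots> = 2^k * d^2 - 2 * \<bar>d\<bar> + (1/2)^k"
    by (simp only: a)
  finally show ?thesis by simp
qed

lemma cont_meas[measurable (raw)]:
  fixes f :: "real \<times> real \<Rightarrow> real"
  shows "continuous_on UNIV f \<Longrightarrow> f \<in> borel_measurable lborel"
  using borel_measurable_continuous_onI by simp

lemma LIM:
  fixes S :: "nat \<Rightarrow> real \<times> real \<Rightarrow> real" and e :: "nat \<Rightarrow> real" and B :: real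
  assumes Sc: "\<And>N. continuous_on UNIV (S N)"
    and Cau: "\<And>M N. M \<le> N \<Longrightarrow> (LINT z:Om|lborel. (S N z - S M z)^2) \<le> e M"
    and e0: "e \<longlonglongrightarrow> 0"
    and Bd: "\<And>N. (LINT z:Om|lborel. (S N z)^2) \<le> B"
  obtains r G D where "strict_mono r" "G \<in> borel_measurable lborel" "set_integrable lborel Om D"
    "AE z in lborel. z \<in> Om \<longrightarrow> (\<lambda>k. S (r k) z) \<longlonglongrightarrow> G z"
    "\<And>k. AE z in lborel. z \<in> Om \<longrightarrow> \<bar>S (r k) z\<bar> \<le> D z"
    "set_integrable lborel Om (\<lambda>z. (G z)^2)"
proof -
  have Sm[measurable]: "S N \<in> borel_measurable lborel" for N by (rule cont_meas[OF Sc])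
  obtain r where r: "strict_mono r" "\<And>k. e (r k) \<le> (1/4)^k"
    using LIM_a[OF e0] by blast
  define d where "d k z = S (r (Suc k)) z - S (r k) z" for k z
  have dc: "continuous_on UNIV (d k)" for k
    unfolding d_def by (intro continuous_intros Sc)
  have d2: "(LINT z:Om|lborel. (d k z)^2) \<le> (1/4)^k" for k
  proof -
    have "r k \<le> r (Suc k)" using r(1) by (simp add: strict_mono_less_eq)
    then show ?thesis using Cau[of "r k" "r (Suc k)"] r(2)[of k] unfolding d_def by simp
  qed
  define K where "K = (LINT z:Om|lborel. (1::real))"
  have d1: "(LINT z:Om|lborel. \<bar>d k z\<bar>) \<le> (1/2)^k * (K + 1) / 2" for k
  proof -
    have i2: "set_integrable lborel Om (\<lambda>z. (d k z)^2)"
      by (rule cont_set_integrable) (intro continuous_intros dc)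
    have i1: "set_integrable lborel Om (\<lambda>z. (1/2::real)^k * 1)"
      by (rule const_set_integrable)
    have "(LINT z:Om|lborel. \<bar>d k z\<bar>) \<le> (LINT z:Om|lborel. ((1/2)^k * 1 + 2^k * (d k z)^2) / 2)"
    proof (rule set_integral_mono)
      show "set_integrable lborel Om (\<lambda>z. \<bar>d k z\<bar>)"
        by (rule cont_set_integrable) (intro continuous_intros dc)
      show "set_integrable lborel Om (\<lambda>z. ((1/2)^k * 1 + 2^k * (d k z)^2) / 2)"
        by (rule cont_set_integrable) (intro continuous_intros dc, auto)
      show "\<bar>d k z\<bar> \<le> ((1/2)^k * 1 + 2^k * (d k z)^2) / 2" for z
        using amgm_abs[of "d k z" k] by simp
    qed
    also have "\<dots> = ((1/2)^k * K + 2^k * (LINT z:Om|lborel. (d k z)^2)) / 2"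
      using set_integral_add(2)[OF i1 set_integrable_mult_right[OF i2, of "2^k"]]
        set_integral_mult_right[where a="(1/2::real)^k" and A=Om and M=lborel and f="\<lambda>_. 1"]
      unfolding K_def by simp
    also have "\<dots> \<le> ((1/2)^k * K + 2^k * (1/4)^k) / 2"
      using d2[of k] by (intro divide_right_mono add_left_mono mult_left_mono) auto
    also have "(2::real)^k * (1/4)^k = (1/2)^k"
      by (simp add: power_mult_distrib[symmetric])
    finally show ?thesis by (simp add: algebra_simps)
  qed
  define fi where "fi i z = indicator Om z * \<bar>d i z\<bar>" for i z
  have fint: "integrable lborel (fi i)" for i
  proof -
    have "set_integrable lborel Om (\<lambda>z. \<bar>d i z\<bar>)"
      by (rule cont_set_integrable) (intro continuous_intros dc)
    then show ?thesis unfolding set_integrable_def fi_def by simp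
  qed
  have fnn: "0 \<le> fi i z" for i z unfolding fi_def by simp
  have fsum: "summable (\<lambda>i. integral\<^sup>L lborel (fi i))"
  proof (rule summable_comparison_test)
    show "summable (\<lambda>i. (1/2::real)^i * (K + 1) / 2)"
      by (intro summable_divide summable_mult2 summable_geometric) simp
    show "\<exists>N. \<forall>n\<ge>N. norm (integral\<^sup>L lborel (fi n)) \<le> (1/2)^n * (K + 1) / 2"
    proof (intro exI allI impI)
      fix n
      have "integral\<^sup>L lborel (fi n) = (LINT z:Om|lborel. \<bar>d n z\<bar>)"
        unfolding fi_def set_lebesgue_integral_def by simp
      moreover have "0 \<le> integral\<^sup>L lborel (fi n)" by (intro integral_nonneg_AE AE_I2 fnn)
      ultimately show "norm (integral\<^sup>L lborel (fi n)) \<le> (1/2)^n * (K + 1) / 2"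
        using d1[of n] by simp
    qed
  qed
  note lb = LIM_b[OF fint fnn fsum]
  define D where "D z = \<bar>S (r 0) z\<bar> + (\<Sum>i. \<bar>d i z\<bar>)" for z
  have Dint: "set_integrable lborel Om D"
  proof -
    have "integrable lborel (\<lambda>z. indicator Om z * \<bar>S (r 0) z\<bar> + (\<Sum>i. fi i z))"
    proof (rule Bochner_Integration.integrable_add[OF _ lb(2)])
      have "set_integrable lborel Om (\<lambda>z. \<bar>S (r 0) z\<bar>)"
        by (rule cont_set_integrable) (intro continuous_intros Sc)
      then show "integrable lborel (\<lambda>z. indicator Om z * \<bar>S (r 0) z\<bar>)"
        unfolding set_integrable_def by simp
    qed
    moreover have "indicator Om z * \<bar>S (r 0) z\<bar> + (\<Sum>i. fi i z) = indicator Om z *\<^sub>R D z" for z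
      by (cases "z \<in> Om") (simp_all add: fi_def D_def)
    ultimately show ?thesis unfolding set_integrable_def by simp
  qed
  define G where "G z = lim (\<lambda>k. S (r k) z)" for z
  have Gm[measurable]: "G \<in> borel_measurable lborel"
    unfolding G_def by measurable
  have conv: "(\<lambda>k. S (r k) z) \<longlonglongrightarrow> G z" "\<bar>S (r k) z\<bar> \<le> D z"
    if z: "z \<in> Om" "summable (\<lambda>i. fi i z)" for z k
  proof -
    have sa: "summable (\<lambda>i. \<bar>d i z\<bar>)" using z by (simp add: fi_def)
    have tel: "S (r k) z = S (r 0) z + (\<Sum>i<k. d i z)" for k
      unfolding d_def using sum_lessThan_telescope[of "\<lambda>i. S (r i) z" k] by simp
    have "(\<lambda>k. S (r 0) z + (\<Sum>i<k. d i z)) \<longlonglongrightarrow> S (r 0) z + (\<Sum>i. d i z)"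
      by (rule tendsto_add[OF tendsto_const summable_LIMSEQ[OF summable_rabs_cancel[OF sa]]])
    then have "(\<lambda>k. S (r k) z) \<longlonglongrightarrow> S (r 0) z + (\<Sum>i. d i z)"
      by (simp only: tel[symmetric])
    then show "(\<lambda>k. S (r k) z) \<longlonglongrightarrow> G z"
      unfolding G_def using convergentI convergent_LIMSEQ_iff by metis
    have "\<bar>S (r k) z\<bar> \<le> \<bar>S (r 0) z\<bar> + \<bar>\<Sum>i<k. d i z\<bar>"
      by (subst tel[of k]) (rule abs_triangle_ineq)
    also have "\<dots> \<le> \<bar>S (r 0) z\<bar> + (\<Sum>i<k. \<bar>d i z\<bar>)"
      by (intro add_left_mono sum_abs)
    also have "\<dots> \<le> D z"
      unfolding D_def by (intro add_left_mono sum_le_suminf sa) auto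
    finally show "\<bar>S (r k) z\<bar> \<le> D z" .
  qed
  have ae1: "AE z in lborel. z \<in> Om \<longrightarrow> (\<lambda>k. S (r k) z) \<longlonglongrightarrow> G z"
    using lb(1) by eventually_elim (use conv in auto)
  have ae2: "AE z in lborel. z \<in> Om \<longrightarrow> \<bar>S (r k) z\<bar> \<le> D z" for k
    using lb(1) by eventually_elim (use conv in auto)
  have G2: "set_integrable lborel Om (\<lambda>z. (G z)^2)"
  proof -
    define u where "u k z = ennreal (indicator Om z * (S (r k) z)^2)" for k z
    have um[measurable]: "u k \<in> borel_measurable lborel" for k
      unfolding u_def by measurable
    have ub: "integral\<^sup>N lborel (u k) \<le> ennreal B" for k
    proof -
      have "set_integrable lborel Om (\<lambda>z. (S (r k) z)^2)"
        by (rule cont_set_integrable) (intro continuous_intros Sc)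
      then have "integrable lborel (\<lambda>z. indicator Om z * (S (r k) z)^2)"
        unfolding set_integrable_def by simp
      then have "integral\<^sup>N lborel (u k) = ennreal (LINT z:Om|lborel. (S (r k) z)^2)"
        unfolding u_def set_lebesgue_integral_def
        by (subst nn_integral_eq_integral) auto
      then show ?thesis using Bd[of "r k"] by (simp add: ennreal_leI)
    qed
    have ae3: "AE z in lborel. liminf (\<lambda>k. u k z) = ennreal (indicator Om z * (G z)^2)"
      using ae1
    proof eventually_elim
      case (elim z)
      show ?case
      proof (cases "z \<in> Om")
        case True
        then have "(\<lambda>k. u k z) \<longlonglongrightarrow> ennreal (indicator Om z * (G z)^2)"
          unfolding u_def using elim by (intro tendsto_ennrealI tendsto_intros) auto
        then show ?thesis by (rule lim_imp_Liminf[rotated]) simp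
      next
        case False
        then show ?thesis unfolding u_def by (simp add: Liminf_const)
      qed
    qed
    have "(\<integral>\<^sup>+z. ennreal (indicator Om z * (G z)^2) \<partial>lborel) = (\<integral>\<^sup>+z. liminf (\<lambda>k. u k z) \<partial>lborel)"
      using ae3 by (intro nn_integral_cong_AE) auto
    also have "\<dots> \<le> liminf (\<lambda>k. integral\<^sup>N lborel (u k))"
      by (rule nn_integral_liminf) simp
    also have "\<dots> \<le> limsup (\<lambda>k. integral\<^sup>N lborel (u k))"
      by (rule Liminf_le_Limsup) simp
    also have "\<dots> \<le> ennreal B"
      by (rule Limsup_bounded) (use ub in auto)
    finally have fin: "(\<integral>\<^sup>+z. ennreal (norm (indicator Om z * (G z)^2)) \<partial>lborel) < \<infinity>"
      by (simp add: abs_mult) (meson ennreal_less_top le_less_trans)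
    have "integrable lborel (\<lambda>z. indicator Om z * (G z)^2)"
      by (rule integrableI_bounded[OF _ fin]) measurable
    then show ?thesis unfolding set_integrable_def by simp
  qed
  show ?thesis
    by (rule that[OF r(1) Gm Dint ae1 ae2 G2])
qed

definition dtv :: "(nat \<Rightarrow> real) \<Rightarrow> nat \<Rightarrow> real \<times> real \<Rightarrow> real" where
  "dtv \<xi> N z = (\<Sum>j<N. (- (real j * \<xi> j)) * sin (real j * fst z) * sin (real j * snd z))"

definition dxv :: "(nat \<Rightarrow> real) \<Rightarrow> nat \<Rightarrow> real \<times> real \<Rightarrow> real" where
  "dxv \<xi> N z = (\<Sum>j<N. (real j * \<xi> j) * cos (real j * fst z) * cos (real j * snd z))"

lemma dtv_cont: "continuous_on UNIV (dtv \<xi> N)"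
  unfolding dtv_def by (intro continuous_intros)

lemma dxv_cont: "continuous_on UNIV (dxv \<xi> N)"
  unfolding dxv_def by (intro continuous_intros)

lemma vN_dt: "((\<lambda>s. vN \<xi> N (s, x)) has_real_derivative dtv \<xi> N (t, x)) (at t)"
  unfolding vN_def trm_def dtv_def
  by (auto intro!: derivative_eq_intros sum.cong)

lemma vN_dx: "((\<lambda>y. vN \<xi> N (t, y)) has_real_derivative dxv \<xi> N (t, x)) (at x)"
  unfolding vN_def trm_def dxv_def
  by (auto intro!: derivative_eq_intros sum.cong)

lemma vN_per: "vN \<xi> N (t + 2*pi, x) = vN \<xi> N (t, x)"
proof -
  have "vN \<xi> N (t + 2*pi, x) = vN \<xi> N ((t + pi) + pi, pi - (pi - x))"
    by (simp add: algebra_simps)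
  also have "\<dots> = vN \<xi> N (t, x)" by (simp only: vN_sym minus_minus)
  finally show ?thesis .
qed

lemma smooth2_diff: "smooth2 \<phi> \<Longrightarrow> \<phi> differentiable (at z)"
  by (erule smooth2.cases) (metis prod.collapse)

lemma smooth2_dt: "smooth2 \<phi> \<Longrightarrow> smooth2 (dt \<phi>)"
  by (erule smooth2.cases) auto

lemma smooth2_dx: "smooth2 \<phi> \<Longrightarrow> smooth2 (dx \<phi>)"
  by (erule smooth2.cases) auto

lemma smooth2_cont: "smooth2 \<phi> \<Longrightarrow> continuous_on UNIV \<phi>"
  by (meson continuous_at_imp_continuous_on differentiable_imp_continuous_within smooth2_diff)

lemma smooth2_pdt:
  assumes "smooth2 \<phi>"
  shows "((\<lambda>s. \<phi> (s, x)) has_real_derivative dt \<phi> (t, x)) (at t)"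
proof -
  have "((\<lambda>s. (s, x)) has_derivative (\<lambda>h. (h, 0))) (at t)"
    by (auto intro!: derivative_eq_intros)
  then have "(\<lambda>s. (s, x)) differentiable (at t)" by (rule differentiableI)
  then have "((\<lambda>s. \<phi> (s, x))) differentiable (at t)"
    using differentiable_chain_at[of "\<lambda>s. (s, x)" t \<phi>] smooth2_diff[OF assms]
    by (simp add: o_def)
  then show ?thesis
    unfolding dt_def by (simp add: DERIV_deriv_iff_real_differentiable)
qed

lemma smooth2_pdx:
  assumes "smooth2 \<phi>"
  shows "((\<lambda>y. \<phi> (t, y)) has_real_derivative dx \<phi> (t, x)) (at x)"
proof -
  have "((\<lambda>y. (t, y)) has_derivative (\<lambda>h. (0, h))) (at x)"
    by (auto intro!: derivative_eq_intros)
  then have "(\<lambda>y. (t, y)) differentiable (at x)" by (rule differentiableI)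
  then have "((\<lambda>y. \<phi> (t, y))) differentiable (at x)"
    using differentiable_chain_at[of "\<lambda>y. (t, y)" x \<phi>] smooth2_diff[OF assms]
    by (simp add: o_def)
  then show ?thesis
    unfolding dx_def by (simp add: DERIV_deriv_iff_real_differentiable)
qed

lemma cont_slice_t:
  fixes h :: "real \<times> real \<Rightarrow> real"
  assumes "continuous_on UNIV h"
  shows "(\<lambda>t. h (t, x)) integrable_on {a..b}"
proof -
  have "continuous_on UNIV (\<lambda>t. h (t, x))"
    by (intro continuous_on_compose2[OF assms]) (auto intro!: continuous_intros)
  then show ?thesis by (auto intro: integrable_continuous_real continuous_on_subset)
qed

lemma cont_slice_x:
  fixes h :: "real \<times> real \<Rightarrow> real"
  assumes "continuous_on UNIV h"
  shows "(\<lambda>x. h (t, x)) integrable_on {a..b}"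
proof -
  have "continuous_on UNIV (\<lambda>x. h (t, x))"
    by (intro continuous_on_compose2[OF assms]) (auto intro!: continuous_intros)
  then show ?thesis by (auto intro: integrable_continuous_real continuous_on_subset)
qed

lemma C1:
  assumes sm: "smooth2 \<phi>" and per: "t_periodic \<phi>" and n: "n \<ge> 1"
  shows "(LINT z:Om|lborel. (vN \<xi> N z)^n * dt \<phi> z)
       = - (LINT z:Om|lborel. (real n * (vN \<xi> N z)^(n-1) * dtv \<xi> N z) * \<phi> z)"
proof -
  have pc: "continuous_on UNIV \<phi>" by (rule smooth2_cont[OF sm])
  have dpc: "continuous_on UNIV (dt \<phi>)" by (rule smooth2_cont[OF smooth2_dt[OF sm]])
  have cA: "continuous_on UNIV (\<lambda>z. (vN \<xi> N z)^n * dt \<phi> z)"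
    by (intro continuous_intros vN_cont dpc)
  have cB: "continuous_on UNIV (\<lambda>z. (real n * (vN \<xi> N z)^(n-1) * dtv \<xi> N z) * \<phi> z)"
    by (intro continuous_intros vN_cont dtv_cont pc)
  have inner: "integral {0..2*pi} (\<lambda>t. (vN \<xi> N (t,x))^n * dt \<phi> (t,x))
     = - integral {0..2*pi} (\<lambda>t. (real n * (vN \<xi> N (t,x))^(n-1) * dtv \<xi> N (t,x)) * \<phi> (t,x))" for x
  proof -
    let ?F = "\<lambda>t. (vN \<xi> N (t,x))^n * \<phi> (t,x)"
    let ?A = "\<lambda>t. (vN \<xi> N (t,x))^n * dt \<phi> (t,x)"
    let ?B = "\<lambda>t. (real n * (vN \<xi> N (t,x))^(n-1) * dtv \<xi> N (t,x)) * \<phi> (t,x)"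
    have "((\<lambda>t. ?B t + ?A t) has_integral (?F (2*pi) - ?F 0)) {0..2*pi}"
    proof (rule fundamental_theorem_of_calculus)
      fix t
      have "(?F has_real_derivative (real n * (dtv \<xi> N (t,x) * (vN \<xi> N (t,x))^(n - Suc 0))) * \<phi> (t,x)
              + dt \<phi> (t,x) * (vN \<xi> N (t,x))^n) (at t)"
        by (rule DERIV_mult[OF DERIV_power[OF vN_dt] smooth2_pdt[OF sm]])
      then have "(?F has_real_derivative ?B t + ?A t) (at t)"
        by (simp add: algebra_simps)
      then show "(?F has_vector_derivative ?B t + ?A t) (at t within {0..2*pi})"
        by (simp add: has_real_derivative_iff_has_vector_derivative has_vector_derivative_at_within)
    qed simp
    moreover have "?F (2*pi) = ?F 0"
      using vN_per[of \<xi> N 0 x] per unfolding t_periodic_def by (metis add_0)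
    ultimately have "integral {0..2*pi} (\<lambda>t. ?B t + ?A t) = 0"
      by (simp add: integral_unique)
    moreover have "integral {0..2*pi} (\<lambda>t. ?B t + ?A t) = integral {0..2*pi} ?B + integral {0..2*pi} ?A"
      by (rule integral_add) (use cont_slice_t[OF cB] cont_slice_t[OF cA] in auto)
    ultimately show ?thesis by simp
  qed
  show ?thesis
    unfolding cont_int_Om_xt[OF cA] cont_int_Om_xt[OF cB]
    by (simp add: inner)
qed

lemma C2:
  assumes sm: "smooth2 \<phi>" and n: "n \<ge> 1"
  shows "(LINT z:Om|lborel. (vN \<xi> N z)^n * dx \<phi> z)
       = - (LINT z:Om|lborel. (real n * (vN \<xi> N z)^(n-1) * dxv \<xi> N z) * \<phi> z)"
proof -
  have pc: "continuous_on UNIV \<phi>" by (rule smooth2_cont[OF sm])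
  have dpc: "continuous_on UNIV (dx \<phi>)" by (rule smooth2_cont[OF smooth2_dx[OF sm]])
  have cA: "continuous_on UNIV (\<lambda>z. (vN \<xi> N z)^n * dx \<phi> z)"
    by (intro continuous_intros vN_cont dpc)
  have cB: "continuous_on UNIV (\<lambda>z. (real n * (vN \<xi> N z)^(n-1) * dxv \<xi> N z) * \<phi> z)"
    by (intro continuous_intros vN_cont dxv_cont pc)
  have inner: "integral {0..pi} (\<lambda>x. (vN \<xi> N (t,x))^n * dx \<phi> (t,x))
     = - integral {0..pi} (\<lambda>x. (real n * (vN \<xi> N (t,x))^(n-1) * dxv \<xi> N (t,x)) * \<phi> (t,x))" for t
  proof -
    let ?F = "\<lambda>x. (vN \<xi> N (t,x))^n * \<phi> (t,x)"
    let ?A = "\<lambda>x. (vN \<xi> N (t,x))^n * dx \<phi> (t,x)"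
    let ?B = "\<lambda>x. (real n * (vN \<xi> N (t,x))^(n-1) * dxv \<xi> N (t,x)) * \<phi> (t,x)"
    have "((\<lambda>x. ?B x + ?A x) has_integral (?F pi - ?F 0)) {0..pi}"
    proof (rule fundamental_theorem_of_calculus)
      fix x
      have "(?F has_real_derivative (real n * (dxv \<xi> N (t,x) * (vN \<xi> N (t,x))^(n - Suc 0))) * \<phi> (t,x)
              + dx \<phi> (t,x) * (vN \<xi> N (t,x))^n) (at x)"
        by (rule DERIV_mult[OF DERIV_power[OF vN_dx] smooth2_pdx[OF sm]])
      then have "(?F has_real_derivative ?B x + ?A x) (at x)"
        by (simp add: algebra_simps)
      then show "(?F has_vector_derivative ?B x + ?A x) (at x within {0..pi})"
        by (simp add: has_real_derivative_iff_has_vector_derivative has_vector_derivative_at_within)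
    qed simp
    moreover have "?F pi = 0" "?F 0 = 0"
      using n by (simp_all add: vN_bdry)
    ultimately have "integral {0..pi} (\<lambda>x. ?B x + ?A x) = 0"
      by (simp add: integral_unique)
    moreover have "integral {0..pi} (\<lambda>x. ?B x + ?A x) = integral {0..pi} ?B + integral {0..pi} ?A"
      by (rule integral_add) (use cont_slice_x[OF cB] cont_slice_x[OF cA] in auto)
    ultimately show ?thesis by simp
  qed
  show ?thesis
    unfolding cont_int_Om_tx[OF cA] cont_int_Om_tx[OF cB]
    by (simp add: inner)
qed

lemma sum_lessThan_diff:
  fixes h :: "nat \<Rightarrow> real"
  assumes "M \<le> N"
  shows "(\<Sum>j<N. h j) - (\<Sum>j<M. h j) = (\<Sum>j\<in>{M..<N}. h j)"
proof -
  have "{..<N} = {..<M} \<union> {M..<N}" using assms by auto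
  then have "(\<Sum>j<N. h j) = (\<Sum>j<M. h j) + (\<Sum>j\<in>{M..<N}. h j)"
    by (metis sum.union_disjoint finite_lessThan finite_atLeastLessThan ivl_disj_int_one(2))
  then show ?thesis by simp
qed

lemma seq_est:
  fixes f g :: "nat \<Rightarrow> real \<Rightarrow> real" and a :: "nat \<Rightarrow> real"
  assumes fc: "\<And>j. continuous_on UNIV (f j)"
    and orth: "\<And>j k. j \<noteq> k \<Longrightarrow> integral {0..2*pi} (\<lambda>t. f j t * f k t) = 0"
    and fb: "\<And>j t. \<bar>f j t\<bar> \<le> 1"
    and gc: "\<And>j. continuous_on UNIV (g j)" and gb: "\<And>j x. \<bar>g j x\<bar> \<le> 1"
    and sa: "summable (\<lambda>j. (a j)^2)"
  obtains r G D where "strict_mono r" "G \<in> borel_measurable lborel" "set_integrable lborel Om D"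
    "AE z in lborel. z \<in> Om \<longrightarrow> (\<lambda>k. (\<Sum>j<r k. a j * f j (fst z) * g j (snd z))) \<longlonglongrightarrow> G z"
    "\<And>k. AE z in lborel. z \<in> Om \<longrightarrow> \<bar>\<Sum>j<r k. a j * f j (fst z) * g j (snd z)\<bar> \<le> D z"
    "set_integrable lborel Om (\<lambda>z. (G z)^2)"
proof -
  define S where "S N z = (\<Sum>j<N. a j * f j (fst z) * g j (snd z))" for N z
  define T where "T = (\<Sum>j. (a j)^2)"
  define e where "e M = 2*pi^2 * (T - (\<Sum>j<M. (a j)^2))" for M
  have fc': "continuous_on UNIV (\<lambda>z::real\<times>real. f j (fst z))" for j
    by (intro continuous_on_compose2[OF fc]) (auto intro!: continuous_intros)
  have gc': "continuous_on UNIV (\<lambda>z::real\<times>real. g j (snd z))" for j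
    by (intro continuous_on_compose2[OF gc]) (auto intro!: continuous_intros)
  have Sc: "continuous_on UNIV (S N)" for N
    unfolding S_def by (intro continuous_intros fc' gc')
  have partial: "(\<Sum>j<N. (a j)^2) \<le> T" for N
    unfolding T_def by (intro sum_le_suminf sa) auto
  have Cau: "(LINT z:Om|lborel. (S N z - S M z)^2) \<le> e M" if "M \<le> N" for M N
  proof -
    have "(LINT z:Om|lborel. (S N z - S M z)^2) = (LINT z:Om|lborel. (\<Sum>j\<in>{M..<N}. a j * f j (fst z) * g j (snd z))^2)"
      unfolding S_def by (simp add: sum_lessThan_diff[OF that])
    also have "\<dots> \<le> 2*pi^2 * (\<Sum>j\<in>{M..<N}. (a j)^2)"
      by (rule FE[OF _ fc orth fb gc gb]) simp
    also have "\<dots> = 2*pi^2 * ((\<Sum>j<N. (a j)^2) - (\<Sum>j<M. (a j)^2))"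
      by (simp add: sum_lessThan_diff[OF that])
    also have "\<dots> \<le> e M"
      unfolding e_def using partial[of N] by (intro mult_left_mono) auto
    finally show ?thesis .
  qed
  have e0: "e \<longlonglongrightarrow> 0"
  proof -
    have "(\<lambda>M. 2*pi^2 * (T - (\<Sum>j<M. (a j)^2))) \<longlonglongrightarrow> 2*pi^2 * (T - T)"
      unfolding T_def by (intro tendsto_intros summable_LIMSEQ sa)
    then show ?thesis unfolding e_def by simp
  qed
  have Bd: "(LINT z:Om|lborel. (S N z)^2) \<le> 2*pi^2 * T" for N
  proof -
    have "(LINT z:Om|lborel. (S N z)^2) \<le> 2*pi^2 * (\<Sum>j<N. (a j)^2)"
      unfolding S_def by (rule FE[OF _ fc orth fb gc gb]) simp
    also have "\<dots> \<le> 2*pi^2 * T"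
      using partial[of N] by (intro mult_left_mono) auto
    finally show ?thesis .
  qed
  obtain r G D where "strict_mono r" "G \<in> borel_measurable lborel" "set_integrable lborel Om D"
    "AE z in lborel. z \<in> Om \<longrightarrow> (\<lambda>k. S (r k) z) \<longlonglongrightarrow> G z"
    "\<And>k. AE z in lborel. z \<in> Om \<longrightarrow> \<bar>S (r k) z\<bar> \<le> D z"
    "set_integrable lborel Om (\<lambda>z. (G z)^2)"
    using LIM[OF Sc Cau e0 Bd] by blast
  then show ?thesis
    using that unfolding S_def by blast
qed

lemma dtv_est:
  assumes sx: "summable (\<lambda>j. (real j)^2 * (\<xi> j)^2)"
  obtains r G D where "strict_mono r" "G \<in> borel_measurable lborel" "set_integrable lborel Om D"
    "AE z in lborel. z \<in> Om \<longrightarrow> (\<lambda>k. dtv \<xi> (r k) z) \<longlonglongrightarrow> G z"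
    "\<And>k. AE z in lborel. z \<in> Om \<longrightarrow> \<bar>dtv \<xi> (r k) z\<bar> \<le> D z"
    "set_integrable lborel Om (\<lambda>z. (G z)^2)"
proof -
  have sa: "summable (\<lambda>j. (- (real j * \<xi> j))^2)"
    using sx by (simp add: power_mult_distrib)
  have fc: "continuous_on UNIV (\<lambda>t. sin (real j * t))" for j by (intro continuous_intros)
  have fb: "\<bar>sin (real j * t)\<bar> \<le> 1" for j t by simp
  obtain r G D where H: "strict_mono r" "G \<in> borel_measurable lborel" "set_integrable lborel Om D"
    "AE z in lborel. z \<in> Om \<longrightarrow> (\<lambda>k. (\<Sum>j<r k. (- (real j * \<xi> j)) * sin (real j * fst z) * sin (real j * snd z))) \<longlonglongrightarrow> G z"
    "\<And>k. AE z in lborel. z \<in> Om \<longrightarrow> \<bar>\<Sum>j<r k. (- (real j * \<xi> j)) * sin (real j * fst z) * sin (real j * snd z)\<bar> \<le> D z"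
    "set_integrable lborel Om (\<lambda>z. (G z)^2)"
    using seq_est[where f="\<lambda>j t. sin (real j * t)" and g="\<lambda>j x. sin (real j * x)" and a="\<lambda>j. - (real j * \<xi> j)", OF fc sin_orth fb fc fb sa]
    by blast
  show ?thesis
    by (rule that[unfolded dtv_def, OF H])
qed

lemma dxv_est:
  assumes sx: "summable (\<lambda>j. (real j)^2 * (\<xi> j)^2)"
  obtains r G D where "strict_mono r" "G \<in> borel_measurable lborel" "set_integrable lborel Om D"
    "AE z in lborel. z \<in> Om \<longrightarrow> (\<lambda>k. dxv \<xi> (r k) z) \<longlonglongrightarrow> G z"
    "\<And>k. AE z in lborel. z \<in> Om \<longrightarrow> \<bar>dxv \<xi> (r k) z\<bar> \<le> D z"
    "set_integrable lborel Om (\<lambda>z. (G z)^2)"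
proof -
  have sa: "summable (\<lambda>j. (real j * \<xi> j)^2)"
    using sx by (simp add: power_mult_distrib)
  have fc: "continuous_on UNIV (\<lambda>t. cos (real j * t))" for j by (intro continuous_intros)
  have fb: "\<bar>cos (real j * t)\<bar> \<le> 1" for j t by simp
  obtain r G D where H: "strict_mono r" "G \<in> borel_measurable lborel" "set_integrable lborel Om D"
    "AE z in lborel. z \<in> Om \<longrightarrow> (\<lambda>k. (\<Sum>j<r k. (real j * \<xi> j) * cos (real j * fst z) * cos (real j * snd z))) \<longlonglongrightarrow> G z"
    "\<And>k. AE z in lborel. z \<in> Om \<longrightarrow> \<bar>\<Sum>j<r k. (real j * \<xi> j) * cos (real j * fst z) * cos (real j * snd z)\<bar> \<le> D z"
    "set_integrable lborel Om (\<lambda>z. (G z)^2)"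
    using seq_est[where f="\<lambda>j t. cos (real j * t)" and g="\<lambda>j x. cos (real j * x)" and a="\<lambda>j. real j * \<xi> j", OF fc cos_orth fb fc fb sa]
    by blast
  show ?thesis
    by (rule that[unfolded dxv_def, OF H])
qed

lemma set_DCT:
  fixes s :: "nat \<Rightarrow> real \<times> real \<Rightarrow> real"
  assumes sm: "\<And>k. s k \<in> borel_measurable lborel" and fm: "f \<in> borel_measurable lborel"
    and wi: "set_integrable lborel Om w"
    and lim: "AE z in lborel. z \<in> Om \<longrightarrow> (\<lambda>k. s k z) \<longlonglongrightarrow> f z"
    and bnd: "\<And>k. AE z in lborel. z \<in> Om \<longrightarrow> \<bar>s k z\<bar> \<le> w z"
  shows "(\<lambda>k. LINT z:Om|lborel. s k z) \<longlonglongrightarrow> (LINT z:Om|lborel. f z)"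
proof -
  have "(\<lambda>k. integral\<^sup>L lborel (\<lambda>z. indicator Om z * s k z)) \<longlonglongrightarrow> integral\<^sup>L lborel (\<lambda>z. indicator Om z * f z)"
  proof (rule integral_dominated_convergence[where w="\<lambda>z. indicator Om z * w z"])
    show "(\<lambda>z. indicator Om z * f z) \<in> borel_measurable lborel" using fm by measurable
    show "(\<lambda>z. indicator Om z * s k z) \<in> borel_measurable lborel" for k using sm[of k] by measurable
    show "integrable lborel (\<lambda>z. indicator Om z * w z)" using wi unfolding set_integrable_def by simp
    show "AE z in lborel. (\<lambda>k. indicator Om z * s k z) \<longlonglongrightarrow> indicator Om z * f z"
      using lim by eventually_elim (auto intro: tendsto_mult_left)
    show "AE z in lborel. norm (indicator Om z * s k z) \<le> indicator Om z * w z" for k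
      using bnd[of k] by eventually_elim (auto simp: indicator_def)
  qed
  then show ?thesis unfolding set_lebesgue_integral_def by simp
qed

lemma bounded_on_Om:
  fixes h :: "real \<times> real \<Rightarrow> real"
  assumes "continuous_on UNIV h"
  obtains C where "C \<ge> 0" "\<And>z. z \<in> Om \<Longrightarrow> \<bar>h z\<bar> \<le> C"
proof -
  have "compact (h ` cbox (0,0) (2*pi,pi))"
    by (rule compact_continuous_image) (auto intro: continuous_on_subset[OF assms])
  then obtain C where C: "C > 0" "\<And>y. y \<in> h ` cbox (0,0) (2*pi,pi) \<Longrightarrow> norm y \<le> C"
    using compact_imp_bounded bounded_pos by metis
  show ?thesis
    by (rule that[of C]) (use C Om_sub in auto)
qed

lemma weak_t:
  assumes sx: "summable (\<lambda>j. (real j)^2 * (\<xi> j)^2)" and n: "n \<ge> 1"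
  obtains g where "L2_Om g" "\<And>\<phi>. \<phi> \<in> test_per \<Longrightarrow>
     (LINT z:Om|lborel. (vS \<xi> z)^n * dt \<phi> z) = - (LINT z:Om|lborel. g z * \<phi> z)"
proof -
  obtain r G D where H: "strict_mono r" "G \<in> borel_measurable lborel" "set_integrable lborel Om D"
    "AE z in lborel. z \<in> Om \<longrightarrow> (\<lambda>k. dtv \<xi> (r k) z) \<longlonglongrightarrow> G z"
    "\<And>k. AE z in lborel. z \<in> Om \<longrightarrow> \<bar>dtv \<xi> (r k) z\<bar> \<le> D z"
    "set_integrable lborel Om (\<lambda>z. (G z)^2)"
    using dtv_est[OF sx] by blast
  define Bv where "Bv = suminf (bb \<xi>)"
  have Bv0: "Bv \<ge> 0" unfolding Bv_def
    by (intro suminf_nonneg bb_summable sx bb_nonneg)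
  have vb: "\<bar>vS \<xi> z\<bar> \<le> Bv" for z unfolding Bv_def by (rule vS_bound[OF sx])
  have vNb: "\<bar>vN \<xi> N z\<bar> \<le> Bv" for N z unfolding Bv_def by (rule vN_bound[OF sx])
  have vm[measurable]: "vS \<xi> \<in> borel_measurable lborel" by (rule vS_meas[OF sx])
  have Gm[measurable]: "G \<in> borel_measurable lborel" by (rule H(2))
  have dvm[measurable]: "dtv \<xi> N \<in> borel_measurable lborel" for N by (rule cont_meas[OF dtv_cont])
  have vlim: "(\<lambda>k. vN \<xi> (r k) z) \<longlonglongrightarrow> vS \<xi> z" for z
    using LIMSEQ_subseq_LIMSEQ[OF vN_lim[OF sx] H(1)] by (simp add: o_def)
  define g where "g z = real n * (vS \<xi> z)^(n-1) * G z" for z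
  have gm[measurable]: "g \<in> borel_measurable lborel" unfolding g_def by measurable
  have L2: "L2_Om g"
    unfolding L2_Om_def
  proof
    show "set_borel_measurable lborel Om g"
      unfolding set_borel_measurable_def by measurable
    have "set_integrable lborel Om (\<lambda>z. (real n * Bv^(n-1))^2 * (G z)^2)"
      using H(6) by simp
    then show "set_integrable lborel Om (\<lambda>z. (g z)^2)"
    proof (rule set_integrable_bound)
      show "set_borel_measurable lborel Om (\<lambda>z. (g z)^2)"
        unfolding set_borel_measurable_def by measurable
      show "AE z in lborel. z \<in> Om \<longrightarrow> norm ((g z)^2) \<le> norm ((real n * Bv^(n-1))^2 * (G z)^2)"
      proof (intro AE_I2 impI)
        fix z
        have "\<bar>real n * (vS \<xi> z)^(n-1)\<bar> \<le> \<bar>real n * Bv^(n-1)\<bar>"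
          using vb[of z] Bv0 by (simp add: abs_mult power_abs power_mono mult_left_mono)
        then have "(real n * (vS \<xi> z)^(n-1))^2 \<le> (real n * Bv^(n-1))^2"
          by (simp add: abs_le_square_iff)
        then show "norm ((g z)^2) \<le> norm ((real n * Bv^(n-1))^2 * (G z)^2)"
          unfolding g_def by (simp add: power_mult_distrib mult_right_mono)
      qed
    qed
  qed
  show ?thesis
  proof (rule that[OF L2])
    fix \<phi> :: "real \<times> real \<Rightarrow> real"
    assume "\<phi> \<in> test_per"
    then have sm: "smooth2 \<phi>" and per: "t_periodic \<phi>" by (auto simp: test_per_def)
    have pc: "continuous_on UNIV \<phi>" by (rule smooth2_cont[OF sm])
    have dpc: "continuous_on UNIV (dt \<phi>)" by (rule smooth2_cont[OF smooth2_dt[OF sm]])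
    have pm[measurable]: "\<phi> \<in> borel_measurable lborel" by (rule cont_meas[OF pc])
    have dpm[measurable]: "dt \<phi> \<in> borel_measurable lborel" by (rule cont_meas[OF dpc])
    obtain C where C: "C \<ge> 0" "\<And>z. z \<in> Om \<Longrightarrow> \<bar>\<phi> z\<bar> \<le> C"
      using bounded_on_Om[OF pc] by blast
    let ?L = "\<lambda>k. LINT z:Om|lborel. (vN \<xi> (r k) z)^n * dt \<phi> z"
    let ?R = "\<lambda>k. LINT z:Om|lborel. (real n * (vN \<xi> (r k) z)^(n-1) * dtv \<xi> (r k) z) * \<phi> z"
    have L: "?L \<longlonglongrightarrow> (LINT z:Om|lborel. (vS \<xi> z)^n * dt \<phi> z)"
    proof (rule set_DCT[where w="\<lambda>z. Bv^n * \<bar>dt \<phi> z\<bar>"])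
      show "set_integrable lborel Om (\<lambda>z. Bv^n * \<bar>dt \<phi> z\<bar>)"
        by (rule cont_set_integrable) (intro continuous_intros dpc)
      show "AE z in lborel. z \<in> Om \<longrightarrow> (\<lambda>k. (vN \<xi> (r k) z)^n * dt \<phi> z) \<longlonglongrightarrow> (vS \<xi> z)^n * dt \<phi> z"
        by (intro AE_I2 impI tendsto_intros vlim)
      show "AE z in lborel. z \<in> Om \<longrightarrow> \<bar>(vN \<xi> (r k) z)^n * dt \<phi> z\<bar> \<le> Bv^n * \<bar>dt \<phi> z\<bar>" for k
        by (intro AE_I2 impI) (simp add: abs_mult power_abs power_mono mult_right_mono vNb)
    qed measurable
    have R: "?R \<longlonglongrightarrow> (LINT z:Om|lborel. g z * \<phi> z)"
    proof (rule set_DCT[where w="\<lambda>z. (real n * Bv^(n-1) * C) * D z"])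
      show "set_integrable lborel Om (\<lambda>z. (real n * Bv^(n-1) * C) * D z)"
        using H(3) by simp
      show "AE z in lborel. z \<in> Om \<longrightarrow> (\<lambda>k. (real n * (vN \<xi> (r k) z)^(n-1) * dtv \<xi> (r k) z) * \<phi> z) \<longlonglongrightarrow> g z * \<phi> z"
        using H(4) by eventually_elim (auto simp: g_def intro!: tendsto_intros vlim)
      show "AE z in lborel. z \<in> Om \<longrightarrow> \<bar>(real n * (vN \<xi> (r k) z)^(n-1) * dtv \<xi> (r k) z) * \<phi> z\<bar> \<le> (real n * Bv^(n-1) * C) * D z" for k
        using H(5)[of k]
      proof eventually_elim
        case (elim z)
        show ?case
        proof
          assume z: "z \<in> Om"
          have "\<bar>(real n * (vN \<xi> (r k) z)^(n-1) * dtv \<xi> (r k) z) * \<phi> z\<bar>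
              = real n * \<bar>vN \<xi> (r k) z\<bar>^(n-1) * \<bar>dtv \<xi> (r k) z\<bar> * \<bar>\<phi> z\<bar>"
            by (simp add: abs_mult power_abs)
          also have "\<dots> \<le> real n * Bv^(n-1) * D z * C"
            using elim z C vNb Bv0
            by (intro mult_mono power_mono mult_left_mono) (auto intro: order_trans[OF abs_ge_zero])
          finally show "\<bar>(real n * (vN \<xi> (r k) z)^(n-1) * dtv \<xi> (r k) z) * \<phi> z\<bar> \<le> (real n * Bv^(n-1) * C) * D z"
            by (simp add: mult_ac)
        qed
      qed
    qed measurable
    have eq: "?L k = - ?R k" for k
      by (rule C1[OF sm per n])
    have "(\<lambda>k. - ?R k) \<longlonglongrightarrow> (LINT z:Om|lborel. (vS \<xi> z)^n * dt \<phi> z)"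
      using L by (simp add: eq)
    moreover have "(\<lambda>k. - ?R k) \<longlonglongrightarrow> - (LINT z:Om|lborel. g z * \<phi> z)"
      by (rule tendsto_minus[OF R])
    ultimately show "(LINT z:Om|lborel. (vS \<xi> z)^n * dt \<phi> z) = - (LINT z:Om|lborel. g z * \<phi> z)"
      by (rule LIMSEQ_unique)
  qed
qed

lemma weak_x:
  assumes sx: "summable (\<lambda>j. (real j)^2 * (\<xi> j)^2)" and n: "n \<ge> 1"
  obtains g where "L2_Om g" "\<And>\<phi>. \<phi> \<in> test_per \<Longrightarrow>
     (LINT z:Om|lborel. (vS \<xi> z)^n * dx \<phi> z) = - (LINT z:Om|lborel. g z * \<phi> z)"
proof -
  obtain r G D where H: "strict_mono r" "G \<in> borel_measurable lborel" "set_integrable lborel Om D"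
    "AE z in lborel. z \<in> Om \<longrightarrow> (\<lambda>k. dxv \<xi> (r k) z) \<longlonglongrightarrow> G z"
    "\<And>k. AE z in lborel. z \<in> Om \<longrightarrow> \<bar>dxv \<xi> (r k) z\<bar> \<le> D z"
    "set_integrable lborel Om (\<lambda>z. (G z)^2)"
    using dxv_est[OF sx] by blast
  define Bv where "Bv = suminf (bb \<xi>)"
  have Bv0: "Bv \<ge> 0" unfolding Bv_def
    by (intro suminf_nonneg bb_summable sx bb_nonneg)
  have vb: "\<bar>vS \<xi> z\<bar> \<le> Bv" for z unfolding Bv_def by (rule vS_bound[OF sx])
  have vNb: "\<bar>vN \<xi> N z\<bar> \<le> Bv" for N z unfolding Bv_def by (rule vN_bound[OF sx])
  have vm[measurable]: "vS \<xi> \<in> borel_measurable lborel" by (rule vS_meas[OF sx])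
  have Gm[measurable]: "G \<in> borel_measurable lborel" by (rule H(2))
  have dvm[measurable]: "dxv \<xi> N \<in> borel_measurable lborel" for N by (rule cont_meas[OF dxv_cont])
  have vlim: "(\<lambda>k. vN \<xi> (r k) z) \<longlonglongrightarrow> vS \<xi> z" for z
    using LIMSEQ_subseq_LIMSEQ[OF vN_lim[OF sx] H(1)] by (simp add: o_def)
  define g where "g z = real n * (vS \<xi> z)^(n-1) * G z" for z
  have gm[measurable]: "g \<in> borel_measurable lborel" unfolding g_def by measurable
  have L2: "L2_Om g"
    unfolding L2_Om_def
  proof
    show "set_borel_measurable lborel Om g"
      unfolding set_borel_measurable_def by measurable
    have "set_integrable lborel Om (\<lambda>z. (real n * Bv^(n-1))^2 * (G z)^2)"
      using H(6) by simp
    then show "set_integrable lborel Om (\<lambda>z. (g z)^2)"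
    proof (rule set_integrable_bound)
      show "set_borel_measurable lborel Om (\<lambda>z. (g z)^2)"
        unfolding set_borel_measurable_def by measurable
      show "AE z in lborel. z \<in> Om \<longrightarrow> norm ((g z)^2) \<le> norm ((real n * Bv^(n-1))^2 * (G z)^2)"
      proof (intro AE_I2 impI)
        fix z
        have "\<bar>real n * (vS \<xi> z)^(n-1)\<bar> \<le> \<bar>real n * Bv^(n-1)\<bar>"
          using vb[of z] Bv0 by (simp add: abs_mult power_abs power_mono mult_left_mono)
        then have "(real n * (vS \<xi> z)^(n-1))^2 \<le> (real n * Bv^(n-1))^2"
          by (simp add: abs_le_square_iff)
        then show "norm ((g z)^2) \<le> norm ((real n * Bv^(n-1))^2 * (G z)^2)"
          unfolding g_def by (simp add: power_mult_distrib mult_right_mono)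
      qed
    qed
  qed
  show ?thesis
  proof (rule that[OF L2])
    fix \<phi> :: "real \<times> real \<Rightarrow> real"
    assume "\<phi> \<in> test_per"
    then have sm: "smooth2 \<phi>" and per: "t_periodic \<phi>" by (auto simp: test_per_def)
    have pc: "continuous_on UNIV \<phi>" by (rule smooth2_cont[OF sm])
    have dpc: "continuous_on UNIV (dx \<phi>)" by (rule smooth2_cont[OF smooth2_dx[OF sm]])
    have pm[measurable]: "\<phi> \<in> borel_measurable lborel" by (rule cont_meas[OF pc])
    have dpm[measurable]: "dx \<phi> \<in> borel_measurable lborel" by (rule cont_meas[OF dpc])
    obtain C where C: "C \<ge> 0" "\<And>z. z \<in> Om \<Longrightarrow> \<bar>\<phi> z\<bar> \<le> C"
      using bounded_on_Om[OF pc] by blast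
    let ?L = "\<lambda>k. LINT z:Om|lborel. (vN \<xi> (r k) z)^n * dx \<phi> z"
    let ?R = "\<lambda>k. LINT z:Om|lborel. (real n * (vN \<xi> (r k) z)^(n-1) * dxv \<xi> (r k) z) * \<phi> z"
    have L: "?L \<longlonglongrightarrow> (LINT z:Om|lborel. (vS \<xi> z)^n * dx \<phi> z)"
    proof (rule set_DCT[where w="\<lambda>z. Bv^n * \<bar>dx \<phi> z\<bar>"])
      show "set_integrable lborel Om (\<lambda>z. Bv^n * \<bar>dx \<phi> z\<bar>)"
        by (rule cont_set_integrable) (intro continuous_intros dpc)
      show "AE z in lborel. z \<in> Om \<longrightarrow> (\<lambda>k. (vN \<xi> (r k) z)^n * dx \<phi> z) \<longlonglongrightarrow> (vS \<xi> z)^n * dx \<phi> z"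
        by (intro AE_I2 impI tendsto_intros vlim)
      show "AE z in lborel. z \<in> Om \<longrightarrow> \<bar>(vN \<xi> (r k) z)^n * dx \<phi> z\<bar> \<le> Bv^n * \<bar>dx \<phi> z\<bar>" for k
        by (intro AE_I2 impI) (simp add: abs_mult power_abs power_mono mult_right_mono vNb)
    qed measurable
    have R: "?R \<longlonglongrightarrow> (LINT z:Om|lborel. g z * \<phi> z)"
    proof (rule set_DCT[where w="\<lambda>z. (real n * Bv^(n-1) * C) * D z"])
      show "set_integrable lborel Om (\<lambda>z. (real n * Bv^(n-1) * C) * D z)"
        using H(3) by simp
      show "AE z in lborel. z \<in> Om \<longrightarrow> (\<lambda>k. (real n * (vN \<xi> (r k) z)^(n-1) * dxv \<xi> (r k) z) * \<phi> z) \<longlonglongrightarrow> g z * \<phi> z"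
        using H(4) by eventually_elim (auto simp: g_def intro!: tendsto_intros vlim)
      show "AE z in lborel. z \<in> Om \<longrightarrow> \<bar>(real n * (vN \<xi> (r k) z)^(n-1) * dxv \<xi> (r k) z) * \<phi> z\<bar> \<le> (real n * Bv^(n-1) * C) * D z" for k
        using H(5)[of k]
      proof eventually_elim
        case (elim z)
        show ?case
        proof
          assume z: "z \<in> Om"
          have "\<bar>(real n * (vN \<xi> (r k) z)^(n-1) * dxv \<xi> (r k) z) * \<phi> z\<bar>
              = real n * \<bar>vN \<xi> (r k) z\<bar>^(n-1) * \<bar>dxv \<xi> (r k) z\<bar> * \<bar>\<phi> z\<bar>"
            by (simp add: abs_mult power_abs)
          also have "\<dots> \<le> real n * Bv^(n-1) * D z * C"
            using elim z C vNb Bv0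
            by (intro mult_mono power_mono mult_left_mono) (auto intro: order_trans[OF abs_ge_zero])
          finally show "\<bar>(real n * (vN \<xi> (r k) z)^(n-1) * dxv \<xi> (r k) z) * \<phi> z\<bar> \<le> (real n * Bv^(n-1) * C) * D z"
            by (simp add: mult_ac)
        qed
      qed
    qed measurable
    have eq: "?L k = - ?R k" for k
      by (rule C2[OF sm n])
    have "(\<lambda>k. - ?R k) \<longlonglongrightarrow> (LINT z:Om|lborel. (vS \<xi> z)^n * dx \<phi> z)"
      using L by (simp add: eq)
    moreover have "(\<lambda>k. - ?R k) \<longlonglongrightarrow> - (LINT z:Om|lborel. g z * \<phi> z)"
      by (rule tendsto_minus[OF R])
    ultimately show "(LINT z:Om|lborel. (vS \<xi> z)^n * dx \<phi> z) = - (LINT z:Om|lborel. g z * \<phi> z)"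
      by (rule LIMSEQ_unique)
  qed
qed

theorem lemma4p2:
  fixes p :: nat and v :: "real \<times> real \<Rightarrow> real"
  assumes "p \<ge> 2" and "v \<in> Vsp"
  shows "(\<lambda>z. (v z) ^ (2*p)) \<in> Wsp"
proof -
  obtain \<xi> where sx: "summable (\<lambda>j. (real j)^2 * (\<xi> j)^2)" and veq: "v = vS \<xi>"
    using assms(2) unfolding Vsp_def by (auto simp: Vsp_vS)
  have n: "2*p \<ge> 1" using assms(1) by simp
  define Bv where "Bv = suminf (bb \<xi>)"
  have Bv0: "Bv \<ge> 0" unfolding Bv_def
    by (intro suminf_nonneg bb_summable sx bb_nonneg)
  have vb: "\<bar>vS \<xi> z\<bar> \<le> Bv" for z unfolding Bv_def by (rule vS_bound[OF sx])
  have vm[measurable]: "vS \<xi> \<in> borel_measurable lborel" by (rule vS_meas[OF sx])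
  let ?u = "\<lambda>z. (vS \<xi> z) ^ (2*p)"
  have ub: "\<bar>?u z\<bar> \<le> Bv^(2*p)" for z
    by (simp add: power_abs power_mono vb)
  have um: "set_borel_measurable lborel Om ?u"
    unfolding set_borel_measurable_def by measurable
  have L2u: "L2_Om ?u"
    unfolding L2_Om_def
  proof
    show "set_borel_measurable lborel Om ?u" by (rule um)
    show "set_integrable lborel Om (\<lambda>z. (?u z)^2)"
    proof (rule set_integrable_bound[OF const_set_integrable[of "(Bv^(2*p))^2"]])
      show "set_borel_measurable lborel Om (\<lambda>z. (?u z)^2)"
        unfolding set_borel_measurable_def by measurable
      show "AE z in lborel. z \<in> Om \<longrightarrow> norm ((?u z)^2) \<le> norm ((Bv^(2*p))^2)"
      proof (intro AE_I2 impI)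
        fix z
        have "(?u z)^2 \<le> (Bv^(2*p))^2"
          using ub[of z] Bv0 by (simp add: abs_le_square_iff[symmetric])
        then show "norm ((?u z)^2) \<le> norm ((Bv^(2*p))^2)" by simp
      qed
    qed
  qed
  have Linf: "Linf_Om ?u"
    unfolding Linf_Om_def using um ub by blast
  have per: "t_periodic ?u"
    unfolding t_periodic_def by (simp add: vS_per[OF sx])
  obtain g1 where g1: "L2_Om g1" "\<And>\<phi>. \<phi> \<in> test_per \<Longrightarrow>
     (LINT z:Om|lborel. ?u z * dt \<phi> z) = - (LINT z:Om|lborel. g1 z * \<phi> z)"
    using weak_t[OF sx n] by blast
  obtain g2 where g2: "L2_Om g2" "\<And>\<phi>. \<phi> \<in> test_per \<Longrightarrow>
     (LINT z:Om|lborel. ?u z * dx \<phi> z) = - (LINT z:Om|lborel. g2 z * \<phi> z)"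
    using weak_x[OF sx n] by blast
  have tc: "\<phi> \<in> test_c \<Longrightarrow> \<phi> \<in> test_per" for \<phi> by (simp add: test_c_def)
  have H1: "H1_Om ?u"
    unfolding H1_Om_def using per L2u g1 g2 tc by blast
  have zt: "zero_trace ?u"
    unfolding zero_trace_def using g2 by blast
  have ev: "\<forall>t x. ?u (-t, x) = ?u (t, x)" by (simp add: vS_even)
  have X: "?u \<in> Xsp" unfolding Xsp_def using H1 Linf zt ev by blast
  have O: "\<forall>w\<in>Vsp. (LINT z:Om|lborel. ?u z * w z) = 0"
  proof
    fix w assume "w \<in> Vsp"
    then obtain \<zeta> where sz: "summable (\<lambda>j. (real j)^2 * (\<zeta> j)^2)" and weq: "w = vS \<zeta>"
      unfolding Vsp_def by (auto simp: Vsp_vS)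
    show "(LINT z:Om|lborel. ?u z * w z) = 0"
      unfolding weq by (rule orth[OF sx sz])
  qed
  show ?thesis unfolding veq Wsp_def using X O by blast
qed

end
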